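(* For every positive integer $n$: (a) $\displaystyle M(n,2)\le 2\sum_{\omega=0}^{n-1}\sum_{m=0}^{\min\{\omega,n-\omega\}}\binom{\omega-1}{m-1}\binom{n-\omega}{m}\frac{1}{1+m+\binom{\omega}{2}}$; (b) $\displaystyle M(n,3)\le 2\sum_{\omega=0}^{n-1}\sum_{m=0}^{\min\{\omega,n-\omega\}}\sum_{m_1=0}^{m}\binom{m}{m_1}\binom{\omega-m-1}{m-m_1-1}\binom{n-\omega}{m}\frac{1}{\phi_3(m_1,m,\omega)}$, where $\phi_3(m_1,m,\omega)=1+m_1+m(\omega-3)+\binom{\omega}{3}-\binom{\omega}{2}+2\omega$.
   Context: Binomial coefficient conventions: $\binom{a}{-1}$ equals $1$ if $a=-1$ and $0$ otherwise; $\binom{a}{b}=0$ when $a<0$ (other than the case just specified) and when $b>a\ge0$. A grain pattern of length $n$ is a subset $E\subseteq\{2,\dots,n\}$ containing no two consecutive integers. For such $E$, $\phi_E:\{0,1\}^n\to\{0,1\}^n$ sends $\mathbf{x}$ to $\mathbf{y}$ with $y_j=x_{j-1}$ if $j\in E$ and $y_j=x_j$ otherwise. $\Phi_t(\mathbf{x})=\{\phi_E(\mathbf{x}): E \text{ a grain pattern of length } n,\ |E|\le t\}$. A code $\mathcal{C}\subseteq\{0,1\}^n$ is $t$-grain-correcting if for any two distinct codewords $\mathbf{x}_1,\mathbf{x}_2$ one has $\Phi_t(\mathbf{x}_1)\cap\Phi_t(\mathbf{x}_2)=\emptyset$. $M(n,t)$ is the maximum cardinality of a $t$-grain-correcting code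 of length $n$. *)

theory Defs
  imports Complex_Main
begin

text \<open>Binomial coefficient on integers with the paper's conventions:
  binom a (-1) = 1 if a = -1 and 0 otherwise; binom a b = 0 if a < 0 (other cases)
  or b > a >= 0; otherwise the usual binomial coefficient.  (Negative b other than -1
  never occurs in the statement; we set it to 0.)\<close>
definition ibinom :: "int \<Rightarrow> int \<Rightarrow> int" where
  "ibinom a b = (if b = -1 then (if a = -1 then 1 else 0)
                 else if a < 0 \<or> b < 0 then 0
                 else int (nat a choose nat b))"

text \<open>Binary words of length n are bool lists; position j (1-based) is index j-1.\<close>
definition grain_pattern :: "nat \<Rightarrow> nat set \<Rightarrow> bool" where
  "grain_pattern n E \<longleftrightarrow> E \<subseteq> {2..n} \<and> (\<forall>j\<in>E. j + 1 \<notin> E)"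

definition phi_grain :: "nat set \<Rightarrow> bool list \<Rightarrow> bool list" where
  "phi_grain E x = map (\<lambda>i. if Suc i \<in> E then x ! (i - 1) else x ! i) [0..<length x]"

definition Phi_grain :: "nat \<Rightarrow> bool list \<Rightarrow> bool list set" where
  "Phi_grain t x = {phi_grain E x | E. grain_pattern (length x) E \<and> card E \<le> t}"

definition grain_correcting :: "nat \<Rightarrow> nat \<Rightarrow> bool list set \<Rightarrow> bool" where
  "grain_correcting n t C \<longleftrightarrow> C \<subseteq> {x. length x = n} \<and>
     (\<forall>x1\<in>C. \<forall>x2\<in>C. x1 \<noteq> x2 \<longrightarrow> Phi_grain t x1 \<inter> Phi_grain t x2 = {})"

definition M_grain :: "nat \<Rightarrow> nat \<Rightarrow> nat" where
  "M_grain n t = Max {card C | C. grain_correcting n t C}"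

definition phi3 :: "nat \<Rightarrow> nat \<Rightarrow> nat \<Rightarrow> int" where
  "phi3 m1 m w = 1 + int m1 + int m * (int w - 3) + int (w choose 3) - int (w choose 2) + 2 * int w"

end

theory Submission
  imports Defs
begin

definition nc :: "nat set \<Rightarrow> bool" where "nc F \<longleftrightarrow> (\<forall>j\<in>F. Suc j \<notin> F)"
definition adm :: "nat \<Rightarrow> nat set \<Rightarrow> nat set set" where
  "adm t S = {E. E \<subseteq> S \<and> nc E \<and> card E \<le> t}"
definition sh :: "nat \<Rightarrow> nat set \<Rightarrow> nat set \<Rightarrow> nat set" where
  "sh n S E = {k. 2 \<le> k \<and> k \<le> n \<and> ((k \<in> S \<and> k \<notin> E \<and> k - 1 \<notin> E) \<or> (k - 1 \<in> E \<and> k \<notin> S))}"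

definition rr :: "nat set \<Rightarrow> nat \<Rightarrow> nat" where "rr E k = (if k - 1 \<in> E then k - 1 else k)"
definition GG :: "nat set \<Rightarrow> nat set \<Rightarrow> nat set" where "GG E F = rr E ` F"
definition PP :: "nat set \<Rightarrow> nat set \<Rightarrow> nat set" where
  "PP E F = {c \<in> E \<inter> GG E F. c - 1 \<in> GG E F}"
definition enc :: "nat set \<times> nat set \<Rightarrow> nat set \<times> nat set" where
  "enc p = (let E = fst p; F = snd p; P = PP E F; G = GG E F in
     ((\<lambda>c. if c \<in> P then c - 1 else c) ` E, G - (\<lambda>c. c - 1) ` P))"
definition dec :: "nat set \<Rightarrow> nat set \<times> nat set \<Rightarrow> nat set \<times> nat set" where
  "dec S p = (let E' = fst p; G' = snd p; Q = {j \<in> E'. Suc j \<in> S \<and> Suc j \<in> G'};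
     E = (E' - Q) \<union> Suc ` Q; G = G' \<union> Q in (E, (\<lambda>g. if g \<in> E then Suc g else g) ` G))"

lemma enc_facts:
  assumes S: "S \<subseteq> {2..n}" and E: "E \<subseteq> S" "nc E" and F: "F \<subseteq> sh n S E" "nc F"
  shows "GG E F \<subseteq> S" "nc (GG E F - (\<lambda>c. c - 1) ` PP E F)"
    "(\<lambda>c. if c \<in> PP E F then c - 1 else c) ` E \<subseteq> S"
    "nc ((\<lambda>c. if c \<in> PP E F then c - 1 else c) ` E)"
    "dec S (enc (E,F)) = (E,F)"
proof -
  have S2: "\<And>k. k \<in> S \<Longrightarrow> 2 \<le> k \<and> k \<le> n" using S by auto
  have Fk: "\<And>k. k \<in> F \<Longrightarrow> 2 \<le> k \<and> k \<le> n \<and> ((k \<in> S \<and> k \<notin> E \<and> k - 1 \<notin> E) \<or> (k - 1 \<in> E \<and> k \<notin> S))"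
    using F(1) unfolding sh_def by auto
  have Enc: "\<And>j. j \<in> E \<Longrightarrow> Suc j \<notin> E" using E(2) unfolding nc_def by auto
  have Fnc: "\<And>j. j \<in> F \<Longrightarrow> Suc j \<notin> F" using F(2) unfolding nc_def by auto
  have Gmem: "\<And>g. g \<in> GG E F \<longleftrightarrow> (g \<in> F \<and> g - 1 \<notin> E) \<or> (Suc g \<in> F \<and> g \<in> E)"
  proof -
    fix g
    show "g \<in> GG E F \<longleftrightarrow> (g \<in> F \<and> g - 1 \<notin> E) \<or> (Suc g \<in> F \<and> g \<in> E)"
    proof
      assume "g \<in> GG E F"
      then obtain k where k: "k \<in> F" "g = rr E k" unfolding GG_def by blast
      have k2: "2 \<le> k" using Fk k(1) by blast
      show "(g \<in> F \<and> g - 1 \<notin> E) \<or> (Suc g \<in> F \<and> g \<in> E)"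
      proof (cases "k - 1 \<in> E")
        case True
        then show ?thesis using k k2 unfolding rr_def by (simp add: Suc_diff_1)
      next
        case False
        then show ?thesis using k k2 unfolding rr_def by simp
      qed
    next
      assume h: "(g \<in> F \<and> g - 1 \<notin> E) \<or> (Suc g \<in> F \<and> g \<in> E)"
      show "g \<in> GG E F"
      proof (cases "g \<in> F \<and> g - 1 \<notin> E")
        case True
        then have "rr E g = g" unfolding rr_def by simp
        then show ?thesis using True unfolding GG_def by force
      next
        case False
        then have "Suc g \<in> F" "g \<in> E" using h by auto
        then have "rr E (Suc g) = g" unfolding rr_def by simp
        then show ?thesis using \<open>Suc g \<in> F\<close> unfolding GG_def by force
      qed
    qed
  qed
  show G: "GG E F \<subseteq> S"
    using Gmem Fk E(1) by auto
  have G2: "\<And>g. g \<in> GG E F \<Longrightarrow> 2 \<le> g" using G S2 by auto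
  have E2: "\<And>g. g \<in> E \<Longrightarrow> 2 \<le> g" using E(1) S2 by auto
  have Pmem: "\<And>c. c \<in> PP E F \<longleftrightarrow> c \<in> E \<and> c \<in> GG E F \<and> c - 1 \<in> GG E F"
    unfolding PP_def by auto
  show "nc (GG E F - (\<lambda>c. c - 1) ` PP E F)"
    unfolding nc_def
  proof (intro ballI)
    fix j assume j: "j \<in> GG E F - (\<lambda>c. c - 1) ` PP E F"
    show "Suc j \<notin> GG E F - (\<lambda>c. c - 1) ` PP E F"
    proof
      assume sj: "Suc j \<in> GG E F - (\<lambda>c. c - 1) ` PP E F"
      have jg: "j \<in> GG E F" "Suc j \<in> GG E F" using j sj by auto
      have "Suc j \<in> PP E F"
      proof -
        from jg(1) consider "j \<in> F" "j - 1 \<notin> E" | "Suc j \<in> F" "j \<in> E" using Gmem by blast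
        then show ?thesis
        proof cases
          case 1
          from jg(2) consider "Suc j \<in> F" "j \<notin> E" | "Suc (Suc j) \<in> F" "Suc j \<in> E" using Gmem by force
          then show ?thesis
          proof cases
            case 1 then show ?thesis using \<open>j \<in> F\<close> Fnc by blast
          next
            case 2 then show ?thesis using Pmem jg by simp
          qed
        next
          case 2
          from jg(2) consider "Suc j \<in> F" "j \<notin> E" | "Suc (Suc j) \<in> F" "Suc j \<in> E" using Gmem by force
          then show ?thesis using 2 Enc by auto
        qed
      qed
      then have "j \<in> (\<lambda>c. c - 1) ` PP E F" by force
      with j show False by blast
    qed
  qed
  show "(\<lambda>c. if c \<in> PP E F then c - 1 else c) ` E \<subseteq> S"
    using E(1) G Pmem by auto
  show "nc ((\<lambda>c. if c \<in> PP E F then c - 1 else c) ` E)"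
    unfolding nc_def
  proof (intro ballI)
    fix j assume "j \<in> (\<lambda>c. if c \<in> PP E F then c - 1 else c) ` E"
    then obtain c where c: "c \<in> E" "j = (if c \<in> PP E F then c - 1 else c)" by blast
    show "Suc j \<notin> (\<lambda>c. if c \<in> PP E F then c - 1 else c) ` E"
    proof
      assume "Suc j \<in> (\<lambda>c. if c \<in> PP E F then c - 1 else c) ` E"
      then obtain d where d: "d \<in> E" "Suc j = (if d \<in> PP E F then d - 1 else d)" by blast
      have c2: "2 \<le> c" "2 \<le> d" using E2 c d by auto
      show False
      proof (cases "c \<in> PP E F")
        case True
        then have "c - 1 \<in> GG E F" "c \<in> E" using Pmem by auto
        show False
        proof (cases "d \<in> PP E F")
          case True
          then show ?thesis using d c c2 Enc \<open>c \<in> PP E F\<close>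
            by (metis Suc_pred' less_le_trans pos2 diff_Suc_1)
        next
          case False
          then have "d = c" using d c True c2 by simp
          then show ?thesis using False True by simp
        qed
      next
        case False
        note cF = False
        show False
        proof (cases "d \<in> PP E F")
          case True
          then have dg: "d - 1 \<in> GG E F" "d \<in> E" using Pmem by auto
          have "d = Suc (Suc c)" using d c cF True c2 by simp
          then have "Suc c \<in> GG E F" using dg by simp
          then consider "Suc c \<in> F" "c \<notin> E" | "Suc (Suc c) \<in> F" "Suc c \<in> E" using Gmem by force
          then show ?thesis using c Enc \<open>d = Suc (Suc c)\<close> dg by auto
        next
          case False
          then show ?thesis using d c cF Enc by (metis)
        qed
      qed
    qed
  qed
  define P where "P = PP E F"
  define G where "G = GG E F"
  define E' where "E' = (\<lambda>c. if c \<in> P then c - 1 else c) ` E"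
  define G' where "G' = G - (\<lambda>c. c - 1) ` P"
  define Q where "Q = {j \<in> E'. Suc j \<in> S \<and> Suc j \<in> G'}"
  have Pm: "\<And>c. c \<in> P \<longleftrightarrow> c \<in> E \<and> c \<in> G \<and> c - 1 \<in> G" using Pmem P_def G_def by simp
  have Gm: "\<And>g. g \<in> G \<longleftrightarrow> (g \<in> F \<and> g - 1 \<notin> E) \<or> (Suc g \<in> F \<and> g \<in> E)" using Gmem G_def by simp
  have P2: "\<And>c. c \<in> P \<Longrightarrow> 2 \<le> c" using Pm E2 by blast
  have QP: "Q = (\<lambda>c. c - 1) ` P"
  proof (intro set_eqI iffI)
    fix j assume "j \<in> Q"
    then have j: "j \<in> E'" "Suc j \<in> S" "Suc j \<in> G'" unfolding Q_def by auto
    then obtain c where c: "c \<in> E" "j = (if c \<in> P then c - 1 else c)" unfolding E'_def by blast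
    show "j \<in> (\<lambda>c. c - 1) ` P"
    proof (cases "c \<in> P")
      case True then show ?thesis using c by simp
    next
      case False
      then have "j = c" using c by simp
      have "Suc j \<in> G" using j(3) G'_def by blast
      then show ?thesis using Gm \<open>j = c\<close> c(1) Enc by auto
    qed
  next
    fix j assume "j \<in> (\<lambda>c. c - 1) ` P"
    then obtain c where c: "c \<in> P" "j = c - 1" by blast
    have c2: "2 \<le> c" using P2 c by blast
    have sj: "Suc j = c" using c c2 by simp
    have "j \<in> E'" unfolding E'_def using c Pm by force
    moreover have "Suc j \<in> S" using sj c Pm E(1) by blast
    moreover have "Suc j \<in> G'"
    proof -
      have "c \<in> G" using c Pm by blast
      moreover have "c \<notin> (\<lambda>c. c - 1) ` P"
      proof
        assume "c \<in> (\<lambda>c. c - 1) ` P"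
        then obtain d where d: "d \<in> P" "c = d - 1" by blast
        have "d = Suc c" using d P2 by (metis Suc_diff_1 not_numeral_le_zero not_gr0)
        then show False using d(1) c(1) Pm Enc by blast
      qed
      ultimately show ?thesis using sj G'_def by blast
    qed
    ultimately show "j \<in> Q" unfolding Q_def by blast
  qed
  have EE: "(E' - Q) \<union> Suc ` Q = E"
  proof -
    have SQ: "Suc ` Q = P" unfolding QP image_image
    proof (intro set_eqI iffI)
      fix x assume "x \<in> (\<lambda>c. Suc (c - 1)) ` P"
      then obtain c where "c \<in> P" "x = Suc (c - 1)" by blast
      then show "x \<in> P" using P2[of c] by simp
    next
      fix x assume "x \<in> P"
      then have "Suc (x - 1) = x" using P2[of x] by simp
      then show "x \<in> (\<lambda>c. Suc (c - 1)) ` P" using \<open>x \<in> P\<close> by force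
    qed
    have "E' - Q = E - P"
    proof (intro set_eqI iffI)
      fix x assume x: "x \<in> E' - Q"
      then obtain c where c: "c \<in> E" "x = (if c \<in> P then c - 1 else c)" unfolding E'_def by blast
      have "c \<notin> P" using x c QP by auto
      then show "x \<in> E - P" using c by simp
    next
      fix x assume x: "x \<in> E - P"
      then have "x \<in> E'" unfolding E'_def by force
      moreover have "x \<notin> Q"
      proof
        assume "x \<in> Q"
        then obtain d where d: "d \<in> P" "x = d - 1" using QP by blast
        have "d = Suc x" using d P2 by (metis Suc_diff_1 not_numeral_le_zero not_gr0)
        then show False using d x Pm Enc by blast
      qed
      ultimately show "x \<in> E' - Q" by blast
    qed
    then show ?thesis using SQ Pm by blast
  qed
  have GG': "G' \<union> Q = G"
    using QP G'_def Pm by blast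
  have FF: "(\<lambda>g. if g \<in> E then Suc g else g) ` G = F"
  proof (intro set_eqI iffI)
    fix x assume "x \<in> (\<lambda>g. if g \<in> E then Suc g else g) ` G"
    then obtain g where g: "g \<in> G" "x = (if g \<in> E then Suc g else g)" by blast
    then show "x \<in> F" using Gm Fk E(1) by auto
  next
    fix x assume x: "x \<in> F"
    have x2: "2 \<le> x" using Fk x by blast
    show "x \<in> (\<lambda>g. if g \<in> E then Suc g else g) ` G"
    proof (cases "x - 1 \<in> E")
      case True
      then have "x - 1 \<in> G" using Gm x x2 by (simp add: Suc_diff_1)
      then show ?thesis using True x2 by (force simp: image_def intro!: bexI[where x="x - 1"])
    next
      case False
      then have "x \<in> G" "x \<notin> E" using Gm x Fk by auto
      then show ?thesis by force
    qed
  qed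
  show "dec S (enc (E,F)) = (E,F)"
    unfolding dec_def enc_def Let_def
    using EE GG' FF
    unfolding Q_def E'_def G'_def P_def G_def by simp
qed

lemma finite_adm: "finite S \<Longrightarrow> finite (adm t S)"
  unfolding adm_def by (rule finite_subset[of _ "Pow S"]) auto

lemma sh_sub: "sh n S E \<subseteq> {2..n}" unfolding sh_def by auto

lemma card_Sigma_le:
  assumes S: "S \<subseteq> {2..n}"
  shows "card (Sigma (adm t S) (\<lambda>E. adm t (sh n S E))) \<le> card (adm t S) * card (adm t S)"
proof -
  have fS: "finite S" using S finite_subset by blast
  let ?D = "Sigma (adm t S) (\<lambda>E. adm t (sh n S E))"
  have inj: "inj_on enc ?D"
  proof (rule inj_on_inverseI[where g="dec S"])
    fix p assume "p \<in> ?D"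
    then obtain E F where p: "p = (E,F)" "E \<subseteq> S" "nc E" "F \<subseteq> sh n S E" "nc F"
      unfolding adm_def by auto
    then show "dec S (enc p) = p" using enc_facts(5)[OF S] by simp
  qed
  have into: "enc ` ?D \<subseteq> adm t S \<times> adm t S"
  proof
    fix q assume "q \<in> enc ` ?D"
    then obtain E F where p: "q = enc (E,F)" "E \<subseteq> S" "nc E" "F \<subseteq> sh n S E" "nc F"
      "card E \<le> t" "card F \<le> t"
      unfolding adm_def by auto
    have fE: "finite E" using p(2) fS finite_subset by blast
    have fF: "finite F" using p(4) sh_sub finite_subset by (metis finite_atLeastAtMost)
    have c1: "card ((\<lambda>c. if c \<in> PP E F then c - 1 else c) ` E) \<le> t"
      using card_image_le[OF fE] p(6) le_trans by blast
    have "card (GG E F) \<le> card F" unfolding GG_def using card_image_le[OF fF] .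
    moreover have "card (GG E F - (\<lambda>c. c - 1) ` PP E F) \<le> card (GG E F)"
      by (rule card_mono) (auto simp: GG_def fF)
    ultimately have c2: "card (GG E F - (\<lambda>c. c - 1) ` PP E F) \<le> t" using p(7) by linarith
    show "q \<in> adm t S \<times> adm t S"
      using enc_facts[OF S p(2,3,4,5)] c1 c2 p(1)
      unfolding adm_def enc_def Let_def by auto
  qed
  have "card ?D = card (enc ` ?D)" using card_image[OF inj] by simp
  also have "\<dots> \<le> card (adm t S \<times> adm t S)"
    by (rule card_mono[OF _ into]) (simp add: finite_adm fS)
  also have "\<dots> = card (adm t S) * card (adm t S)" by (simp add: card_cartesian_product)
  finally show ?thesis .
qed

definition bnd :: "bool list \<Rightarrow> nat set" where
  "bnd x = {j. 2 \<le> j \<and> j \<le> length x \<and> x!(j-2) \<noteq> x!(j-1)}"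

lemma bnd_sub: "bnd x \<subseteq> {2..length x}" unfolding bnd_def by auto

lemma length_phi[simp]: "length (phi_grain E x) = length x" unfolding phi_grain_def by simp

lemma nth_phi: "i < length x \<Longrightarrow> phi_grain E x ! i = (if Suc i \<in> E then x ! (i - 1) else x ! i)"
  unfolding phi_grain_def by simp

lemma phi_restrict: "phi_grain E x = phi_grain (E \<inter> bnd x) x"
proof (rule nth_equalityI)
  fix i assume i: "i < length (phi_grain E x)"
  then have i': "i < length x" by simp
  show "phi_grain E x ! i = phi_grain (E \<inter> bnd x) x ! i"
  proof (cases "Suc i \<in> E \<and> Suc i \<notin> bnd x")
    case True
    then have "x ! (i - 1) = x ! i"
      using i' unfolding bnd_def by (cases i) auto
    then show ?thesis using i' True by (simp add: nth_phi)
  next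
    case False
    then show ?thesis using i' by (auto simp add: nth_phi)
  qed
qed simp

lemma phi_inj:
  assumes "E \<subseteq> bnd x" "E' \<subseteq> bnd x" "phi_grain E x = phi_grain E' x"
  shows "E = E'"
proof (rule ccontr)
  have key: "False" if "j \<in> A" "j \<notin> B" "A \<subseteq> bnd x" "phi_grain A x = phi_grain B x" for j A B
  proof -
    have j: "2 \<le> j" "j \<le> length x" "x!(j-2) \<noteq> x!(j-1)" using that unfolding bnd_def by auto
    have "phi_grain A x ! (j-1) = x!(j-2)" using j that(1) by (simp add: nth_phi numeral_2_eq_2)
    moreover have "phi_grain B x ! (j-1) = x!(j-1)" using j that(2) by (simp add: nth_phi)
    ultimately show False using that(4) j(3) by simp
  qed
  assume "E \<noteq> E'"
  then obtain j where "j \<in> E \<and> j \<notin> E' \<or> j \<in> E' \<and> j \<notin> E" by blast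
  then show False using key assms by metis
qed

lemma grain_pattern_adm: "E \<in> adm t (bnd x) \<Longrightarrow> grain_pattern (length x) E \<and> card E \<le> t"
proof -
  assume "E \<in> adm t (bnd x)"
  then have "E \<subseteq> bnd x" "nc E" "card E \<le> t" unfolding adm_def by auto
  moreover have "bnd x \<subseteq> {2..length x}" by (rule bnd_sub)
  ultimately show ?thesis unfolding grain_pattern_def nc_def by auto
qed

lemma Phi_eq: "Phi_grain t x = (\<lambda>E. phi_grain E x) ` adm t (bnd x)"
proof
  show "Phi_grain t x \<subseteq> (\<lambda>E. phi_grain E x) ` adm t (bnd x)"
  proof
    fix y assume "y \<in> Phi_grain t x"
    then obtain E where E: "y = phi_grain E x" "grain_pattern (length x) E" "card E \<le> t"
      unfolding Phi_grain_def by blast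
    have fE: "finite E" using E(2) unfolding grain_pattern_def by (meson finite_atLeastAtMost finite_subset)
    have "E \<inter> bnd x \<in> adm t (bnd x)"
      using E(2,3) card_mono[OF fE, of "E \<inter> bnd x"] unfolding adm_def nc_def grain_pattern_def by auto
    then show "y \<in> (\<lambda>E. phi_grain E x) ` adm t (bnd x)"
      using E(1) phi_restrict by blast
  qed
next
  show "(\<lambda>E. phi_grain E x) ` adm t (bnd x) \<subseteq> Phi_grain t x"
    using grain_pattern_adm unfolding Phi_grain_def by blast
qed

lemma finite_bnd: "finite (bnd x)" using bnd_sub finite_subset by (metis finite_atLeastAtMost)

lemma inj_phi: "inj_on (\<lambda>E. phi_grain E x) (adm t (bnd x))"
  by (rule inj_onI) (rule phi_inj, auto simp: adm_def)

lemma card_Phi: "card (Phi_grain t x) = card (adm t (bnd x))"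
  unfolding Phi_eq by (rule card_image[OF inj_phi])

lemma finite_Phi: "finite (Phi_grain t x)"
  unfolding Phi_eq by (simp add: finite_adm finite_bnd)

lemma self_Phi: "x \<in> Phi_grain t x"
proof -
  have "phi_grain {} x = x" by (rule nth_equalityI) (auto simp: nth_phi)
  moreover have "{} \<in> adm t (bnd x)" unfolding adm_def nc_def by simp
  ultimately show ?thesis unfolding Phi_eq by force
qed

lemma card_Phi_pos: "card (Phi_grain t x) \<ge> 1"
proof -
  have "card (Phi_grain t x) > 0" using self_Phi finite_Phi card_gt_0_iff by blast
  then show ?thesis by simp
qed

lemma bnd_phi:
  assumes E: "E \<in> adm t (bnd x)"
  shows "bnd (phi_grain E x) = sh (length x) (bnd x) E"
proof -
  let ?n = "length x" and ?S = "bnd x" and ?y = "phi_grain E x"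
  have ES: "E \<subseteq> ?S" and Enc: "\<And>j. j \<in> E \<Longrightarrow> Suc j \<notin> E" using E unfolding adm_def nc_def by auto
  have Sm: "\<And>k. k \<in> ?S \<longleftrightarrow> 2 \<le> k \<and> k \<le> ?n \<and> x!(k-2) \<noteq> x!(k-1)" unfolding bnd_def by simp
  show ?thesis
  proof (intro set_eqI)
    fix k
    show "k \<in> bnd ?y \<longleftrightarrow> k \<in> sh ?n ?S E"
    proof (cases "2 \<le> k \<and> k \<le> ?n")
      case False then show ?thesis unfolding bnd_def sh_def by auto
    next
      case True
      then have k: "2 \<le> k" "k \<le> ?n" by auto
      have y1: "?y ! (k-2) = (if k - 1 \<in> E then x!(k-3) else x!(k-2))"
        using k by (simp add: nth_phi numeral_2_eq_2 numeral_3_eq_3 Suc_diff_Suc)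
      have y2: "?y ! (k-1) = (if k \<in> E then x!(k-2) else x!(k-1))"
        using k by (simp add: nth_phi numeral_2_eq_2 Suc_diff_Suc)
      have yb: "k \<in> bnd ?y \<longleftrightarrow> ?y ! (k-2) \<noteq> ?y ! (k-1)" using k unfolding bnd_def by simp
      show ?thesis
      proof (cases "k \<in> E")
        case True
        then have "k - 1 \<notin> E" using Enc k by (metis Suc_diff_1 less_le_trans pos2)
        then show ?thesis using True yb y1 y2 unfolding sh_def by auto
      next
        case kE: False
        show ?thesis
        proof (cases "k - 1 \<in> E")
          case True
          then have "k - 1 \<in> ?S" using ES by blast
          then have k3: "3 \<le> k" and xx: "x!(k-3) \<noteq> x!(k-2)" using Sm[of "k-1"] by (auto simp: numeral_3_eq_3 numeral_2_eq_2)
          have "k \<in> bnd ?y \<longleftrightarrow> k \<notin> ?S" using yb y1 y2 True kE xx Sm[of k] k by auto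
          then show ?thesis using True kE k unfolding sh_def by auto
        next
          case False
          then show ?thesis using kE yb y1 y2 Sm[of k] k unfolding sh_def by auto
        qed
      qed
    qed
  qed
qed

lemma sum_card_Phi:
  "(\<Sum>y\<in>Phi_grain t x. card (Phi_grain t y)) \<le> card (Phi_grain t x) * card (Phi_grain t x)"
proof -
  let ?S = "bnd x" and ?n = "length x"
  have "(\<Sum>y\<in>Phi_grain t x. card (Phi_grain t y)) = (\<Sum>E\<in>adm t ?S. card (Phi_grain t (phi_grain E x)))"
    unfolding Phi_eq[of t x] by (rule sum.reindex[OF inj_phi, unfolded comp_def])
  also have "\<dots> = (\<Sum>E\<in>adm t ?S. card (adm t (sh ?n ?S E)))"
    by (rule sum.cong) (auto simp: card_Phi bnd_phi)
  also have "\<dots> = card (Sigma (adm t ?S) (\<lambda>E. adm t (sh ?n ?S E)))"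
    by (rule card_SigmaI[symmetric]) (auto simp: finite_adm finite_bnd intro!: finite_adm finite_subset[OF sh_sub])
  also have "\<dots> \<le> card (adm t ?S) * card (adm t ?S)" by (rule card_Sigma_le[OF bnd_sub])
  finally show ?thesis by (simp add: card_Phi)
qed

lemma recip_sum: "(\<Sum>y\<in>Phi_grain t x. 1 / real (card (Phi_grain t y))) \<ge> 1"
proof -
  define N where "N = real (card (Phi_grain t x))"
  have N1: "N \<ge> 1" unfolding N_def using card_Phi_pos by simp
  have tan: "1 / a \<ge> 2 / N - a / N^2" if "a \<ge> 1" for a :: real
  proof -
    have "0 \<le> (a - N)^2" by simp
    then have "0 \<le> (a - N)^2 / (a * N^2)" using that N1 by simp
    also have "(a - N)^2 / (a * N^2) = a / N^2 - 2 / N + 1 / a"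
      using that N1 by (simp add: field_simps power2_eq_square)
    finally show ?thesis by simp
  qed
  have "(\<Sum>y\<in>Phi_grain t x. 2 / N - real (card (Phi_grain t y)) / N^2)
        \<le> (\<Sum>y\<in>Phi_grain t x. 1 / real (card (Phi_grain t y)))"
    by (rule sum_mono) (rule tan, use card_Phi_pos in simp)
  moreover have "(\<Sum>y\<in>Phi_grain t x. 2 / N - real (card (Phi_grain t y)) / N^2)
      = 2 - (\<Sum>y\<in>Phi_grain t x. real (card (Phi_grain t y))) / N^2"
    using N1 by (simp add: sum_subtractf sum_divide_distrib[symmetric] N_def)
  moreover have "(\<Sum>y\<in>Phi_grain t x. real (card (Phi_grain t y))) \<le> N^2"
  proof -
    have "(\<Sum>y\<in>Phi_grain t x. real (card (Phi_grain t y))) = real (\<Sum>y\<in>Phi_grain t x. card (Phi_grain t y))"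
      by simp
    also have "\<dots> \<le> N * N" unfolding N_def using sum_card_Phi
      by (metis of_nat_le_iff of_nat_mult)
    finally show ?thesis by (simp add: power2_eq_square)
  qed
  ultimately show ?thesis using N1
    by (smt (verit, ccfv_SIG) divide_le_eq_1 zero_less_power)
qed

lemma finite_words: "finite {y::bool list. length y = n}"
  using finite_lists_length_eq[of "UNIV::bool set" n] by simp

lemma Phi_len: "y \<in> Phi_grain t x \<Longrightarrow> length y = length x"
  unfolding Phi_eq by auto

lemma code_bound:
  assumes "grain_correcting n t C"
  shows "real (card C) \<le> (\<Sum>y\<in>{y. length y = n}. 1 / real (card (Phi_grain t y)))"
proof -
  have Cs: "C \<subseteq> {y. length y = n}" and disj: "\<And>x1 x2. x1 \<in> C \<Longrightarrow> x2 \<in> C \<Longrightarrow> x1 \<noteq> x2 \<Longrightarrow> Phi_grain t x1 \<inter> Phi_grain t x2 = {}"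
    using assms unfolding grain_correcting_def by auto
  have fW: "finite {y::bool list. length y = n}" by (rule finite_words)
  have fC: "finite C" using Cs fW finite_subset by blast
  let ?f = "\<lambda>y. 1 / real (card (Phi_grain t y))"
  have "real (card C) = (\<Sum>x\<in>C. 1)" by simp
  also have "\<dots> \<le> (\<Sum>x\<in>C. \<Sum>y\<in>Phi_grain t x. ?f y)" by (rule sum_mono) (rule recip_sum)
  also have "\<dots> = (\<Sum>y\<in>(\<Union>x\<in>C. Phi_grain t x). ?f y)"
    by (rule sum.UNION_disjoint[symmetric]) (use fC finite_Phi disj in auto)
  also have "\<dots> \<le> (\<Sum>y\<in>{y. length y = n}. ?f y)"
    by (rule sum_mono2[OF fW]) (use Cs Phi_len in auto)
  finally show ?thesis .
qed

lemma M_bound: "real (M_grain n t) \<le> (\<Sum>y\<in>{y. length y = n}. 1 / real (card (Phi_grain t y)))"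
proof -
  have fW: "finite {y::bool list. length y = n}" by (rule finite_words)
  let ?A = "{card C | C. grain_correcting n t C}"
  have "?A \<subseteq> {..card {y::bool list. length y = n}}"
    unfolding grain_correcting_def using card_mono[OF fW] by auto
  then have fA: "finite ?A" using finite_subset by blast
  have "grain_correcting n t {}" unfolding grain_correcting_def by simp
  then have "?A \<noteq> {}" by blast
  then have "M_grain n t \<in> ?A" unfolding M_grain_def using Max_in fA by blast
  then obtain C where "grain_correcting n t C" "M_grain n t = card C" by auto
  then show ?thesis using code_bound by simp
qed

definition db :: "bool list \<Rightarrow> bool list" where
  "db y = map (\<lambda>i. y!i \<noteq> y!Suc i) [0..<length y - 1]"

definition Sb :: "bool list \<Rightarrow> nat set" where
  "Sb b = {i. i < length b \<and> b!i}"

fun integ :: "bool \<Rightarrow> bool list \<Rightarrow> bool list" where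
  "integ c [] = [c]"
| "integ c (d#b) = c # integ (c \<noteq> d) b"

lemma length_integ[simp]: "length (integ c b) = Suc (length b)"
  by (induction b arbitrary: c) auto

lemma integ_0[simp]: "integ c b ! 0 = c"
  by (cases b) auto

lemma db_Cons: "y \<noteq> [] \<Longrightarrow> db (a # y) = (a \<noteq> hd y) # db y"
  unfolding db_def by (rule nth_equalityI) (auto simp: nth_Cons' hd_conv_nth)

lemma db_single[simp]: "db [a] = []" unfolding db_def by simp

lemma db_integ[simp]: "db (integ c b) = b"
proof (induction b arbitrary: c)
  case Nil then show ?case by simp
next
  case (Cons d b)
  have "integ (c \<noteq> d) b \<noteq> []" by (cases b) auto
  moreover have "hd (integ (c \<noteq> d) b) = (c \<noteq> d)" by (cases b) auto
  ultimately show ?case using Cons by (auto simp add: db_Cons)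
qed

lemma integ_db: "y \<noteq> [] \<Longrightarrow> integ (y!0) (db y) = y"
proof (induction y)
  case Nil then show ?case by simp
next
  case (Cons a y)
  show ?case
  proof (cases y)
    case Nil then show ?thesis by simp
  next
    case (Cons a' y')
    then have "integ (y!0) (db y) = y" using Cons.IH by simp
    moreover have "(a \<noteq> (a \<noteq> hd y)) = hd y" by auto
    ultimately show ?thesis using Cons by (simp add: db_Cons hd_conv_nth)
  qed
qed

lemma length_db[simp]: "length (db y) = length y - 1" unfolding db_def by simp

lemma bnd_db: "bnd y = (\<lambda>i. i + 2) ` Sb (db y)"
proof (intro set_eqI iffI)
  fix j assume "j \<in> bnd y"
  then have j: "2 \<le> j" "j \<le> length y" "y!(j-2) \<noteq> y!(j-1)" unfolding bnd_def by auto
  then have "j - 2 \<in> Sb (db y)" unfolding Sb_def db_def by (auto simp: Suc_diff_Suc numeral_2_eq_2)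
  moreover have "j = (j - 2) + 2" using j by simp
  ultimately show "j \<in> (\<lambda>i. i + 2) ` Sb (db y)" by blast
next
  fix j assume "j \<in> (\<lambda>i. i + 2) ` Sb (db y)"
  then obtain i where "i \<in> Sb (db y)" "j = i + 2" by blast
  then show "j \<in> bnd y" unfolding Sb_def db_def bnd_def by auto
qed

lemma nc_image_add: "nc ((\<lambda>i. i + c) ` F) \<longleftrightarrow> nc F"
  unfolding nc_def by auto

lemma adm_image_add: "adm t ((\<lambda>i. i + c) ` A) = (\<lambda>F. (\<lambda>i. i + c) ` F) ` adm t A"
proof (intro set_eqI iffI)
  fix E assume "E \<in> adm t ((\<lambda>i. i + c) ` A)"
  then have E: "E \<subseteq> (\<lambda>i. i + c) ` A" "nc E" "card E \<le> t" unfolding adm_def by auto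
  define F where "F = (\<lambda>i. i - c) ` E"
  have EF: "E = (\<lambda>i. i + c) ` F" unfolding F_def image_image using E(1)
    by (force simp: image_def)
  have "F \<subseteq> A" using E(1) unfolding F_def by auto
  moreover have "nc F" using E(2) EF nc_image_add by blast
  moreover have "card F \<le> t" using E(3) EF card_image[of "\<lambda>i. i + c" F] by (simp add: inj_on_def)
  ultimately show "E \<in> (\<lambda>F. (\<lambda>i. i + c) ` F) ` adm t A" using EF unfolding adm_def by blast
next
  fix E assume "E \<in> (\<lambda>F. (\<lambda>i. i + c) ` F) ` adm t A"
  then obtain F where F: "F \<subseteq> A" "nc F" "card F \<le> t" "E = (\<lambda>i. i + c) ` F" unfolding adm_def by auto
  then show "E \<in> adm t ((\<lambda>i. i + c) ` A)" unfolding adm_def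
    using nc_image_add card_image[of "\<lambda>i. i + c" F] by (auto simp: inj_on_def)
qed

lemma card_adm_add: "card (adm t ((\<lambda>i. i + c) ` A)) = card (adm t A)"
proof -
  have i: "inj (\<lambda>i::nat. i + c)" by (simp add: inj_on_def)
  show ?thesis unfolding adm_image_add
    by (rule card_image) (rule inj_onI, metis i inj_image_eq_iff)
qed

definition Nt :: "nat \<Rightarrow> bool list \<Rightarrow> nat" where "Nt t b = card (adm t (Sb b))"

lemma card_Phi_Nt: "card (Phi_grain t y) = Nt t (db y)"
  unfolding card_Phi bnd_db Nt_def by (rule card_adm_add)

lemma sum_words:
  fixes h :: "bool list \<Rightarrow> real"
  shows "(\<Sum>y\<in>{y. length y = Suc L}. h (db y)) = 2 * (\<Sum>b\<in>{b. length b = L}. h b)"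
proof -
  have eq: "{y. length y = Suc L} = (\<lambda>p. integ (fst p) (snd p)) ` ((UNIV::bool set) \<times> {b. length b = L})"
  proof (intro set_eqI iffI)
    fix y :: "bool list" assume "y \<in> {y. length y = Suc L}"
    then have "y \<noteq> []" "length (db y) = L" by auto
    then show "y \<in> (\<lambda>p. integ (fst p) (snd p)) ` ((UNIV::bool set) \<times> {b. length b = L})"
      by (intro image_eqI[where x="(y!0, db y)"]) (use integ_db[of y] in auto)
  qed auto
  have inj: "inj_on (\<lambda>p. integ (fst p) (snd p)) ((UNIV::bool set) \<times> {b. length b = L})"
  proof (rule inj_onI)
    fix p q :: "bool \<times> bool list"
    assume "integ (fst p) (snd p) = integ (fst q) (snd q)"
    then have "integ (fst p) (snd p) ! 0 = integ (fst q) (snd q) ! 0"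
      "db (integ (fst p) (snd p)) = db (integ (fst q) (snd q))" by simp_all
    then show "p = q" by (simp add: prod_eq_iff)
  qed
  have "(\<Sum>y\<in>{y. length y = Suc L}. h (db y)) = (\<Sum>p\<in>(UNIV::bool set) \<times> {b. length b = L}. h (db (integ (fst p) (snd p))))"
    unfolding eq by (rule sum.reindex[OF inj, unfolded comp_def])
  also have "\<dots> = (\<Sum>p\<in>(UNIV::bool set) \<times> {b. length b = L}. h (snd p))" by simp
  also have "\<dots> = (\<Sum>c\<in>(UNIV::bool set). \<Sum>b\<in>{b. length b = L}. h b)"
    by (simp only: sum.cartesian_product split_def)
  also have "\<dots> = 2 * (\<Sum>b\<in>{b. length b = L}. h b)" by (simp add: UNIV_bool)
  finally show ?thesis .
qed

definition NC :: "nat \<Rightarrow> nat set \<Rightarrow> nat set set" where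
  "NC k A = {F. F \<subseteq> A \<and> nc F \<and> card F = k}"

lemma finite_NC: "finite A \<Longrightarrow> finite (NC k A)"
  unfolding NC_def by (rule finite_subset[of _ "Pow A"]) auto

lemma card_adm_sum: "finite A \<Longrightarrow> card (adm t A) = (\<Sum>k\<le>t. card (NC k A))"
proof -
  assume fA: "finite A"
  have "adm t A = (\<Union>k\<le>t. NC k A)" unfolding adm_def NC_def by auto
  moreover have "card (\<Union>k\<le>t. NC k A) = (\<Sum>k\<le>t. card (NC k A))"
    by (rule card_UN_disjoint) (auto simp: finite_NC fA NC_def)
  ultimately show ?thesis by simp
qed

lemma card_NC0: "finite A \<Longrightarrow> card (NC 0 A) = 1"
proof -
  assume fA: "finite A"
  have "NC 0 A = {{}}" unfolding NC_def nc_def using fA by (auto dest: finite_subset)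
  then show ?thesis by simp
qed

lemma NC_add: "NC k ((\<lambda>i. i + c) ` A) = (\<lambda>F. (\<lambda>i. i + c) ` F) ` NC k A"
proof -
  have NCa: "NC k B = {F \<in> adm k B. card F = k}" for B unfolding NC_def adm_def by auto
  have cd: "card ((\<lambda>i. i + c) ` F) = card F" for F by (rule card_image) (simp add: inj_on_def)
  show ?thesis unfolding NCa adm_image_add using cd by auto
qed

lemma card_NC_add: "card (NC k ((\<lambda>i. i + c) ` A)) = card (NC k A)"
proof -
  have i: "inj (\<lambda>i::nat. i + c)" by (simp add: inj_on_def)
  show ?thesis unfolding NC_add
    by (rule card_image) (rule inj_onI, metis i inj_image_eq_iff)
qed

lemma card_NC_Suc: "card (NC k (Suc ` A)) = card (NC k A)"
  using card_NC_add[of k 1 A] by simp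

lemma card_NC_insert0:
  assumes fA: "finite A" and A0: "0 \<notin> A"
  shows "card (NC (Suc k) (insert 0 A)) = card (NC (Suc k) A) + card (NC k (A - {1}))"
proof -
  have eq: "NC (Suc k) (insert 0 A) = NC (Suc k) A \<union> insert 0 ` NC k (A - {1})"
  proof (intro set_eqI iffI)
    fix F assume "F \<in> NC (Suc k) (insert 0 A)"
    then have F: "F \<subseteq> insert 0 A" "nc F" "card F = Suc k" unfolding NC_def by auto
    have fF: "finite F" using F(1) fA finite_subset by blast
    show "F \<in> NC (Suc k) A \<union> insert 0 ` NC k (A - {1})"
    proof (cases "0 \<in> F")
      case False
      then show ?thesis using F unfolding NC_def by auto
    next
      case True
      then have "1 \<notin> F" using F(2) unfolding nc_def by auto
      have c: "card (F - {0}) = k" using F(3) True fF by simp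
      have s: "F - {0} \<subseteq> A - {1}" using F(1) \<open>1 \<notin> F\<close> by auto
      have n: "nc (F - {0})" using F(2) unfolding nc_def by blast
      have "F - {0} \<in> NC k (A - {1})" using c s n unfolding NC_def by blast
      moreover have "F = insert 0 (F - {0})" using True by auto
      ultimately show ?thesis by blast
    qed
  next
    fix F assume "F \<in> NC (Suc k) A \<union> insert 0 ` NC k (A - {1})"
    then show "F \<in> NC (Suc k) (insert 0 A)"
    proof
      assume "F \<in> NC (Suc k) A" then show ?thesis unfolding NC_def by auto
    next
      assume "F \<in> insert 0 ` NC k (A - {1})"
      then obtain G where G: "G \<subseteq> A - {1}" "nc G" "card G = k" "F = insert 0 G" unfolding NC_def by auto
      have "finite G" using G(1) fA finite_subset by blast
      moreover have "0 \<notin> G" using G(1) A0 by auto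
      ultimately have "card F = Suc k" using G by simp
      moreover have "F \<subseteq> insert 0 A" using G by auto
      moreover have "nc F" using G(2,4) \<open>0 \<notin> G\<close> G(1) unfolding nc_def by auto
      ultimately show ?thesis unfolding NC_def by blast
    qed
  qed
  have disj: "NC (Suc k) A \<inter> insert 0 ` NC k (A - {1}) = {}"
  proof -
    have "0 \<notin> F" if "F \<in> NC (Suc k) A" for F using that A0 unfolding NC_def by blast
    then show ?thesis by blast
  qed
  have inj: "inj_on (insert 0) (NC k (A - {1}))"
  proof (rule inj_onI)
    fix F G assume "F \<in> NC k (A - {1})" "G \<in> NC k (A - {1})" "insert 0 F = insert 0 G"
    moreover have "0 \<notin> F" "0 \<notin> G" using calculation(1,2) A0 unfolding NC_def by blast+
    ultimately show "F = G" by (metis insert_ident)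
  qed
  have f1: "finite (NC (Suc k) A)" by (rule finite_NC[OF fA])
  have f2: "finite (insert 0 ` NC k (A - {1}))" using finite_NC fA by blast
  show ?thesis unfolding eq card_Un_disjoint[OF f1 f2 disj] card_image[OF inj] ..
qed

lemma Sb_Nil[simp]: "Sb [] = {}" unfolding Sb_def by simp

lemma Sb_Cons: "Sb (c#b) = (if c then insert 0 (Suc ` Sb b) else Suc ` Sb b)"
proof (intro set_eqI)
  fix i
  show "i \<in> Sb (c#b) \<longleftrightarrow> i \<in> (if c then insert 0 (Suc ` Sb b) else Suc ` Sb b)"
  proof (cases i)
    case 0 then show ?thesis unfolding Sb_def by auto
  next
    case (Suc j)
    have "Suc j \<in> Suc ` Sb b \<longleftrightarrow> j \<in> Sb b" by auto
    then show ?thesis unfolding Suc Sb_def by auto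
  qed
qed

lemma finite_Sb[simp]: "finite (Sb b)" unfolding Sb_def by simp

definition g :: "nat \<Rightarrow> bool list \<Rightarrow> nat" where "g k b = card (NC k (Sb b))"

lemma g0[simp]: "g 0 b = 1" unfolding g_def by (simp add: card_NC0)

lemma g_Nil[simp]: "g (Suc k) [] = 0"
  unfolding g_def NC_def by simp

lemma g_False[simp]: "g k (False#b) = g k b"
  unfolding g_def Sb_Cons by (simp add: card_NC_Suc)

lemma Sb_minus0: "Sb b - {0} = Suc ` Sb (tl b)"
  by (cases b) (auto simp: Sb_Cons)

lemma g_True: "g (Suc k) (True#b) = g (Suc k) b + g k (tl b)"
proof -
  have "Suc ` Sb b - {1} = Suc ` (Sb b - {0})" by auto
  also have "\<dots> = Suc ` Suc ` Sb (tl b)" by (simp add: Sb_minus0)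
  finally have e: "Suc ` Sb b - {1} = Suc ` Suc ` Sb (tl b)" .
  have e': "Suc ` Sb b - {Suc 0} = Suc ` Suc ` Sb (tl b)" using e by simp
  show ?thesis unfolding g_def Sb_Cons
    by (simp add: card_NC_insert0 e' card_NC_Suc)
qed

lemma Nt_sum: "Nt t b = (\<Sum>k\<le>t. g k b)"
  unfolding Nt_def g_def by (simp add: card_adm_sum)

fun hdT :: "bool list \<Rightarrow> bool" where "hdT [] = False" | "hdT (c#_) = c"
fun wt :: "bool list \<Rightarrow> nat" where
  "wt [] = 0" | "wt (c#b) = (if c then Suc (wt b) else wt b)"
fun mb :: "bool list \<Rightarrow> nat" where
  "mb [] = 0" | "mb (c#b) = (if c then (if hdT b then mb b else Suc (mb b)) else mb b)"
fun m1b :: "bool list \<Rightarrow> nat" where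
  "m1b [] = 0"
| "m1b (c#b) = (if c then (if hdT b then (if hdT (tl b) then m1b b else m1b b - 1) else Suc (m1b b)) else m1b b)"

lemma ch2: "Suc w choose 2 = (w choose 2) + w"
  by (simp add: numeral_2_eq_2)
lemma ch3: "Suc w choose 3 = (w choose 3) + (w choose 2)"
  by (simp add: numeral_3_eq_3 numeral_2_eq_2)

lemma g1: "g 1 b = wt b"
proof (induction b)
  case Nil then show ?case by simp
next
  case (Cons c b)
  then show ?case using g_True[of 0 b] by (cases c) auto
qed

lemma g1s[simp]: "g (Suc 0) b = wt b" using g1 by simp
lemma gNil2[simp]: "g 2 [] = 0" "g 3 [] = 0" by (simp_all add: numeral_2_eq_2 numeral_3_eq_3)

lemma g2: "int (g 2 b) = int (wt b choose 2) - int (wt b) + int (mb b)"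
proof (induction b)
  case Nil then show ?case by (simp add: numeral_2_eq_2)
next
  case (Cons c b)
  show ?case
  proof (cases c)
    case False then show ?thesis using Cons by simp
  next
    case True
    have gt: "g 2 (True#b) = g 2 b + g 1 (tl b)" using g_True[of 1 b] by (simp add: numeral_2_eq_2)
    show ?thesis
    proof (cases b)
      case Nil then show ?thesis using True gt by (simp add: numeral_2_eq_2)
    next
      case (Cons c' b')
      then show ?thesis using True gt Cons.IH by (cases c') (auto simp: g1 ch2)
    qed
  qed
qed

lemma g3: "int (g 3 b) = int (wt b choose 3) - (int (wt b) - 2) * (int (wt b) - int (mb b))
   + int (wt b) - 2 * int (mb b) + int (m1b b)"
proof (induction b)
  case Nil then show ?case by (simp add: numeral_3_eq_3)
next
  case (Cons c b)
  show ?case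
  proof (cases c)
    case False then show ?thesis using Cons by simp
  next
    case True
    have gt: "g 3 (True#b) = g 3 b + g 2 (tl b)" using g_True[of 2 b] by (simp add: numeral_3_eq_3 numeral_2_eq_2)
    show ?thesis
    proof (cases b)
      case Nil then show ?thesis using True gt by (simp add: numeral_3_eq_3)
    next
      case (Cons c' b')
      show ?thesis
      proof (cases c')
        case False
        then show ?thesis using True gt Cons.IH Cons g2[of b'] by (simp add: ch2 ch3 algebra_simps)
      next
        case c'T: True
        show ?thesis
        proof (cases "hdT b'")
          case True
          then show ?thesis using c'T \<open>c\<close> gt Cons.IH Cons g2[of b'] by (simp add: ch2 ch3 algebra_simps)
        next
          case False
          then show ?thesis using c'T \<open>c\<close> gt Cons.IH Cons g2[of b'] by (simp add: ch2 ch3 algebra_simps)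
        qed
      qed
    qed
  qed
qed

definition Kc :: "nat \<Rightarrow> nat \<Rightarrow> nat \<Rightarrow> nat" where
  "Kc w m m1 = (if m1 = m then (if w = m then 1 else 0)
     else if 2*m - m1 \<le> w then (w - m - 1) choose (m - m1 - 1) else 0)"

definition F3 :: "nat \<Rightarrow> nat \<Rightarrow> nat \<Rightarrow> nat \<Rightarrow> nat \<Rightarrow> nat" where
  "F3 s L w m m1 = (if s = 0 then (if w \<le> L then (m choose m1) * Kc w m m1 * ((L-w) choose m) else 0)
     else if s = 1 then (if w \<le> L \<and> 1 \<le> m \<and> 1 \<le> m1 then ((m-1) choose (m1-1)) * Kc w m m1 * ((L-w) choose (m-1)) else 0)
     else (if w \<le> L \<and> 1 \<le> m then ((m-1) choose m1) * Kc w m m1 * ((L-w) choose (m-1)) else 0))"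

lemma Kc_Suc: "Kc (Suc w) (Suc m) (Suc m1) = Kc w m m1"
proof -
  have "(2 * Suc m - Suc m1 \<le> Suc w) = (2*m - m1 \<le> w)" by arith
  then show ?thesis unfolding Kc_def by simp
qed

lemma Kc_0: "1 \<le> m \<Longrightarrow> m1 \<le> m \<Longrightarrow> Kc 0 m m1 = 0"
  unfolding Kc_def by auto

lemma Kc_pascal:
  assumes "m1 < m"
  shows "Kc (Suc w) m m1 = Kc w m (Suc m1) + Kc w m m1"
proof (cases "Suc m1 = m")
  case True
  then have a: "Kc w m (Suc m1) = (if w = m then 1 else 0)" unfolding Kc_def by simp
  have b: "Kc w m m1 = (if m + 1 \<le> w then 1 else 0)" using True unfolding Kc_def by auto
  have c: "Kc (Suc w) m m1 = (if m \<le> w then 1 else 0)" using True unfolding Kc_def by auto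
  show ?thesis unfolding a b c by auto
next
  case False
  then have lt: "Suc m1 < m" using assms by simp
  define k where "k = m - m1 - 2"
  have km: "m - m1 - 1 = Suc k" "m - Suc m1 - 1 = k" using lt unfolding k_def by auto
  have a: "Kc w m (Suc m1) = (if 2*m - Suc m1 \<le> w then (w - m - 1) choose k else 0)"
  proof -
    have "m - Suc (Suc m1) = k" using lt unfolding k_def by arith
    then show ?thesis using lt unfolding Kc_def by simp
  qed
  have b: "Kc w m m1 = (if 2*m - m1 \<le> w then (w - m - 1) choose (Suc k) else 0)"
    using lt km unfolding Kc_def by auto
  have c: "Kc (Suc w) m m1 = (if 2*m - m1 \<le> Suc w then (Suc w - m - 1) choose (Suc k) else 0)"
    using lt km unfolding Kc_def by auto
  show ?thesis
  proof (cases "2*m - m1 \<le> w")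
    case True
    then have "Suc w - m - 1 = Suc (w - m - 1)" using lt by arith
    moreover have "2*m - Suc m1 \<le> w" "2*m - m1 \<le> Suc w" using True by arith+
    ultimately show ?thesis unfolding a b c using True by simp
  next
    case F: False
    show ?thesis
    proof (cases "2*m - m1 = Suc w")
      case True
      then have "w - m - 1 = k" "Suc w - m - 1 = Suc k" using lt unfolding k_def by arith+
      moreover have "2*m - Suc m1 \<le> w" "2*m - m1 \<le> Suc w" using True by arith+
      ultimately show ?thesis unfolding a b c using True F by simp
    next
      case False
      then have "\<not> 2*m - Suc m1 \<le> w" "\<not> 2*m - m1 \<le> Suc w" using F by arith+
      then show ?thesis unfolding a b c using F by simp
    qed
  qed
qed

lemma F3_1_Suc: "F3 1 (Suc L) (Suc w) (Suc m) (Suc m1) = F3 0 L w m m1"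
  unfolding F3_def by (simp add: Kc_Suc)

lemma F3_1_zero: "w = 0 \<or> m = 0 \<or> m1 = 0 \<Longrightarrow> F3 1 (Suc L) w m m1 = 0"
proof (cases "m1 \<le> m")
  case True then show "w = 0 \<or> m = 0 \<or> m1 = 0 \<Longrightarrow> ?thesis" unfolding F3_def using Kc_0 by auto
next
  case False then show ?thesis unfolding F3_def by auto
qed

lemma F3_2_Suc: "F3 2 (Suc L) (Suc w) m m1 = F3 1 L w m (Suc m1) + F3 2 L w m m1"
proof (cases "m1 < m \<and> 1 \<le> m \<and> w \<le> L")
  case True
  then show ?thesis unfolding F3_def using Kc_pascal[of m1 m w]
    by (simp add: algebra_simps)
next
  case False
  then consider "\<not> (1 \<le> m \<and> w \<le> L)" | "m \<le> m1" "1 \<le> m" by linarith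
  then show ?thesis
  proof cases
    case 1 then show ?thesis unfolding F3_def by auto
  next
    case 2
    then have "m - 1 < m1" by simp
    then show ?thesis unfolding F3_def by (auto simp: binomial_eq_0)
  qed
qed

lemma F3_2_zero: "F3 2 (Suc L) 0 m m1 = 0"
proof (cases "m1 < m")
  case True then show ?thesis unfolding F3_def using Kc_0 by auto
next
  case False then show ?thesis unfolding F3_def by auto
qed

lemma F3_0_Suc: "F3 0 (Suc L) w m m1 = F3 0 L w m m1 + F3 1 L w m m1 + F3 2 L w m m1"
proof (cases "w \<le> L")
  case True
  then have e: "Suc L - w = Suc (L - w)" by arith
  show ?thesis
  proof (cases m)
    case 0 then show ?thesis unfolding F3_def using True by (simp add: e)
  next
    case (Suc m')
    show ?thesis
    proof (cases m1)
      case 0 then show ?thesis unfolding F3_def using True Suc by (simp add: e algebra_simps)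
    next
      case (Suc m1')
      then show ?thesis unfolding F3_def using True \<open>m = Suc m'\<close> by (simp add: e algebra_simps)
    qed
  qed
next
  case False
  show ?thesis
  proof (cases "w = Suc L")
    case True
    have "(m choose m1) * Kc w m m1 * ((Suc L - w) choose m) = 0"
    proof (cases m)
      case 0 then show ?thesis using True unfolding Kc_def by (cases m1) auto
    next
      case (Suc m') then show ?thesis using True by simp
    qed
    then show ?thesis unfolding F3_def using False True by simp
  next
    case False
    then show ?thesis unfolding F3_def using \<open>\<not> w \<le> L\<close> by auto
  qed
qed

definition st :: "bool list \<Rightarrow> nat" where
  "st b = (if \<not> hdT b then 0 else if \<not> hdT (tl b) then 1 else 2)"

definition cnt3 :: "nat \<Rightarrow> nat \<Rightarrow> nat \<Rightarrow> nat \<Rightarrow> nat \<Rightarrow> nat" where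
  "cnt3 L s w m m1 = card {b. length b = L \<and> st b = s \<and> wt b = w \<and> mb b = m \<and> m1b b = m1}"

lemma card_split:
  "card {b. length b = Suc L \<and> P b} = card {b. length b = L \<and> P (True#b)} + card {b. length b = L \<and> P (False#b)}"
proof -
  have eq: "{b. length b = Suc L \<and> P b} = Cons True ` {b. length b = L \<and> P (True#b)} \<union> Cons False ` {b. length b = L \<and> P (False#b)}"
  proof (intro set_eqI iffI)
    fix b assume "b \<in> {b. length b = Suc L \<and> P b}"
    then obtain c b' where "b = c # b'" "length b' = L" "P (c#b')" by (cases b) auto
    then show "b \<in> Cons True ` {b. length b = L \<and> P (True#b)} \<union> Cons False ` {b. length b = L \<and> P (False#b)}"
      by (cases c) auto
  qed auto
  have f: "finite {b::bool list. length b = L \<and> Q b}" for Q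
    by (rule finite_subset[OF _ finite_words[of L]]) auto
  show ?thesis unfolding eq
    by (subst card_Un_disjoint) (auto simp: f card_image)
qed

lemma card_split2:
  assumes "\<And>b. P (True#b) \<longleftrightarrow> A b" "\<And>b. P (False#b) \<longleftrightarrow> B b"
  shows "card {b. length b = Suc L \<and> P b} = card {b. length b = L \<and> A b} + card {b. length b = L \<and> B b}"
  unfolding card_split using assms by simp

lemma st_le: "st b \<le> 2" unfolding st_def by auto

lemma card_st_split:
  "card {b. length b = L \<and> Q b} = card {b. length b = L \<and> st b = 0 \<and> Q b}
     + card {b. length b = L \<and> st b = 1 \<and> Q b} + card {b. length b = L \<and> st b = 2 \<and> Q b}"
proof -
  have f: "finite {b::bool list. length b = L \<and> R b}" for R
    by (rule finite_subset[OF _ finite_words[of L]]) auto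
  have eq: "{b. length b = L \<and> Q b} = ({b. length b = L \<and> st b = 0 \<and> Q b} \<union> {b. length b = L \<and> st b = 1 \<and> Q b})
      \<union> {b. length b = L \<and> st b = 2 \<and> Q b}"
    using st_le by (auto simp: le_Suc_eq numeral_2_eq_2)
  have d1: "{b. length b = L \<and> st b = 0 \<and> Q b} \<inter> {b. length b = L \<and> st b = 1 \<and> Q b} = {}" by auto
  have d2: "({b. length b = L \<and> st b = 0 \<and> Q b} \<union> {b. length b = L \<and> st b = 1 \<and> Q b}) \<inter> {b. length b = L \<and> st b = 2 \<and> Q b} = {}" by auto
  show ?thesis unfolding eq card_Un_disjoint[OF finite_UnI[OF f f] f d2] card_Un_disjoint[OF f f d1] ..
qed

lemma m1_pos: "st b = 1 \<Longrightarrow> m1b b \<ge> 1"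
  unfolding st_def by (cases b) (auto split: if_splits)

lemma m1_pos': "hdT b \<Longrightarrow> \<not> hdT (tl b) \<Longrightarrow> m1b b \<ge> 1"
  using m1_pos unfolding st_def by auto

lemma cnt3_0: "cnt3 (Suc L) 0 w m m1 = cnt3 L 0 w m m1 + cnt3 L 1 w m m1 + cnt3 L 2 w m m1"
proof -
  have e1: "{b. length b = L \<and> (st (True#b) = 0 \<and> wt (True#b) = w \<and> mb (True#b) = m \<and> m1b (True#b) = m1)} = {}"
    by (auto simp: st_def)
  have e2: "{b. length b = L \<and> (st (False#b) = 0 \<and> wt (False#b) = w \<and> mb (False#b) = m \<and> m1b (False#b) = m1)}
     = {b. length b = L \<and> (wt b = w \<and> mb b = m \<and> m1b b = m1)}"
    by (auto simp: st_def)
  have "cnt3 (Suc L) 0 w m m1 = card {b. length b = L \<and> (wt b = w \<and> mb b = m \<and> m1b b = m1)}"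
    unfolding cnt3_def card_split[where P="\<lambda>b. st b = 0 \<and> wt b = w \<and> mb b = m \<and> m1b b = m1"] e1 e2
    by (simp only: card.empty add_0)
  also have "\<dots> = cnt3 L 0 w m m1 + cnt3 L 1 w m m1 + cnt3 L 2 w m m1"
    unfolding cnt3_def by (subst card_st_split) simp
  finally show ?thesis .
qed

lemma cnt3_1: "cnt3 (Suc L) 1 (Suc w) (Suc m) (Suc m1) = cnt3 L 0 w m m1"
proof -
  have "cnt3 (Suc L) 1 (Suc w) (Suc m) (Suc m1) = card {b. length b = L \<and> (st b = 0 \<and> wt b = w \<and> mb b = m \<and> m1b b = m1)}
     + card {b::bool list. length b = L \<and> False}"
    unfolding cnt3_def by (rule card_split2[where P="\<lambda>b. st b = 1 \<and> wt b = Suc w \<and> mb b = Suc m \<and> m1b b = Suc m1"]) (auto simp: st_def)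
  then show ?thesis unfolding cnt3_def by simp
qed

lemma cnt3_1z: "w = 0 \<or> m = 0 \<or> m1 = 0 \<Longrightarrow> cnt3 (Suc L) 1 w m m1 = 0"
proof -
  assume a: "w = 0 \<or> m = 0 \<or> m1 = 0"
  have "cnt3 (Suc L) 1 w m m1 = card {b::bool list. length b = L \<and> False} + card {b::bool list. length b = L \<and> False}"
    unfolding cnt3_def by (rule card_split2[where P="\<lambda>b. st b = 1 \<and> wt b = w \<and> mb b = m \<and> m1b b = m1"]) (use a in \<open>auto simp: st_def\<close>)
  then show ?thesis by simp
qed

lemma cnt3_2: "cnt3 (Suc L) 2 (Suc w) m m1 = cnt3 L 1 w m (Suc m1) + cnt3 L 2 w m m1"
proof -
  have "cnt3 (Suc L) 2 (Suc w) m m1 = card {b. length b = L \<and> (hdT b \<and> wt b = w \<and> mb b = m \<and>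
      (if hdT (tl b) then m1b b else m1b b - 1) = m1)}"
    unfolding cnt3_def by (rule trans[OF card_split2[where P="\<lambda>b. st b = 2 \<and> wt b = Suc w \<and> mb b = m \<and> m1b b = m1" and B="\<lambda>b. False"]]) (auto simp: st_def)
  also have "\<dots> = card {b. length b = L \<and> st b = 0 \<and> (hdT b \<and> wt b = w \<and> mb b = m \<and>
      (if hdT (tl b) then m1b b else m1b b - 1) = m1)} + card {b. length b = L \<and> st b = 1 \<and> (hdT b \<and> wt b = w \<and> mb b = m \<and>
      (if hdT (tl b) then m1b b else m1b b - 1) = m1)} + card {b. length b = L \<and> st b = 2 \<and> (hdT b \<and> wt b = w \<and> mb b = m \<and>
      (if hdT (tl b) then m1b b else m1b b - 1) = m1)}"
    by (rule card_st_split)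
  also have "\<dots> = cnt3 L 1 w m (Suc m1) + cnt3 L 2 w m m1"
  proof -
    have a: "{b. length b = L \<and> st b = 0 \<and> (hdT b \<and> wt b = w \<and> mb b = m \<and>
      (if hdT (tl b) then m1b b else m1b b - 1) = m1)} = {}" by (auto simp: st_def)
    have b: "{b. length b = L \<and> st b = 1 \<and> (hdT b \<and> wt b = w \<and> mb b = m \<and>
      (if hdT (tl b) then m1b b else m1b b - 1) = m1)} = {b. length b = L \<and> st b = 1 \<and> wt b = w \<and> mb b = m \<and> m1b b = Suc m1}"
    proof (intro set_eqI iffI)
      fix x assume "x \<in> {b. length b = L \<and> st b = 1 \<and> (hdT b \<and> wt b = w \<and> mb b = m \<and>
        (if hdT (tl b) then m1b b else m1b b - 1) = m1)}"
      then have h: "length x = L" "hdT x" "\<not> hdT (tl x)" "wt x = w" "mb x = m" "m1b x - 1 = m1"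
        by (auto simp: st_def split: if_splits)
      have "m1b x \<ge> 1" using m1_pos' h(2,3) by blast
      then show "x \<in> {b. length b = L \<and> st b = 1 \<and> wt b = w \<and> mb b = m \<and> m1b b = Suc m1}"
        using h by (auto simp: st_def)
    next
      fix x assume "x \<in> {b. length b = L \<and> st b = 1 \<and> wt b = w \<and> mb b = m \<and> m1b b = Suc m1}"
      then show "x \<in> {b. length b = L \<and> st b = 1 \<and> (hdT b \<and> wt b = w \<and> mb b = m \<and>
        (if hdT (tl b) then m1b b else m1b b - 1) = m1)}"
        by (auto simp: st_def split: if_splits)
    qed
    have c: "{b. length b = L \<and> st b = 2 \<and> (hdT b \<and> wt b = w \<and> mb b = m \<and>
      (if hdT (tl b) then m1b b else m1b b - 1) = m1)} = {b. length b = L \<and> st b = 2 \<and> wt b = w \<and> mb b = m \<and> m1b b = m1}"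
      by (auto simp: st_def split: if_splits)
    show ?thesis unfolding a b c cnt3_def by simp
  qed
  finally show ?thesis .
qed

lemma cnt3_2z: "cnt3 (Suc L) 2 0 m m1 = 0"
proof -
  have "cnt3 (Suc L) 2 0 m m1 = card {b::bool list. length b = L \<and> False} + card {b::bool list. length b = L \<and> False}"
    unfolding cnt3_def by (rule card_split2[where P="\<lambda>b. st b = 2 \<and> wt b = 0 \<and> mb b = m \<and> m1b b = m1"]) (auto simp: st_def)
  then show ?thesis by simp
qed

lemma cnt3_base: "cnt3 0 s w m m1 = (if s = 0 \<and> w = 0 \<and> m = 0 \<and> m1 = 0 then 1 else 0)"
proof -
  have "{b::bool list. length b = 0 \<and> st b = s \<and> wt b = w \<and> mb b = m \<and> m1b b = m1}
     = (if s = 0 \<and> w = 0 \<and> m = 0 \<and> m1 = 0 then {[]} else {})" by (auto simp: st_def)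
  then show ?thesis unfolding cnt3_def by simp
qed

lemma F3_base: "F3 s 0 w m m1 = (if s = 0 \<and> w = 0 \<and> m = 0 \<and> m1 = 0 then 1 else 0)" if hs: "s \<le> 2"
proof -
  consider "s = 0" | "s = 1" | "s = 2" proof -
    have "s = 0 \<or> s = 1 \<or> s = 2" using hs by presburger
    then show "(s = 0 \<Longrightarrow> thesis) \<Longrightarrow> (s = 1 \<Longrightarrow> thesis) \<Longrightarrow> (s = 2 \<Longrightarrow> thesis) \<Longrightarrow> thesis" by blast
  qed
  then show ?thesis
  proof cases
    case 1 then show ?thesis unfolding F3_def Kc_def by (cases m; cases m1) auto
  next
    case 2 then show ?thesis unfolding F3_def Kc_def by (cases m; cases m1) auto
  next
    case 3 then show ?thesis unfolding F3_def Kc_def by (cases m; cases m1) auto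
  qed
qed

lemma cnt3_closed: "s \<le> 2 \<Longrightarrow> cnt3 L s w m m1 = F3 s L w m m1"
proof (induction L arbitrary: s w m m1)
  case 0 then show ?case by (simp add: cnt3_base F3_base)
next
  case (Suc L)
  consider "s = 0" | "s = 1" | "s = 2" proof -
    have "s = 0 \<or> s = 1 \<or> s = 2" using Suc.prems by presburger
    then show "(s = 0 \<Longrightarrow> thesis) \<Longrightarrow> (s = 1 \<Longrightarrow> thesis) \<Longrightarrow> (s = 2 \<Longrightarrow> thesis) \<Longrightarrow> thesis" by blast
  qed
  then show ?case
  proof cases
    case 1 then show ?thesis using Suc.IH by (simp add: cnt3_0 F3_0_Suc)
  next
    case 2
    show ?thesis
    proof (cases "w = 0 \<or> m = 0 \<or> m1 = 0")
      case True then show ?thesis using 2 cnt3_1z[of w m m1 L] F3_1_zero[of w m m1 L] by simp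
    next
      case False
      then obtain w' m' m1' where "w = Suc w'" "m = Suc m'" "m1 = Suc m1'" by (metis not0_implies_Suc)
      then show ?thesis using 2 Suc.IH[of 0 w' m' m1'] cnt3_1[of L w' m' m1'] F3_1_Suc[of L w' m' m1'] by simp
    qed
  next
    case 3
    show ?thesis
    proof (cases w)
      case 0 then show ?thesis using 3 by (simp add: cnt3_2z F3_2_zero)
    next
      case (Suc w') then show ?thesis using 3 Suc.IH by (simp add: cnt3_2 F3_2_Suc)
    qed
  qed
qed

definition c1 :: "nat \<Rightarrow> nat \<Rightarrow> nat" where
  "c1 w m = (if m = 0 then (if w = 0 then 1 else 0) else if w = 0 then 0 else (w - 1) choose (m - 1))"

definition G2 :: "bool \<Rightarrow> nat \<Rightarrow> nat \<Rightarrow> nat \<Rightarrow> nat" where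
  "G2 s L w m = (if \<not> s then (if w \<le> L then c1 w m * ((L - w) choose m) else 0)
     else (if w \<le> L \<and> 1 \<le> m then c1 w m * ((L - w) choose (m - 1)) else 0))"

definition cnt2 :: "bool \<Rightarrow> nat \<Rightarrow> nat \<Rightarrow> nat \<Rightarrow> nat" where
  "cnt2 s L w m = card {b. length b = L \<and> hdT b = s \<and> wt b = w \<and> mb b = m}"

lemma c1_pascal: "c1 w m + c1 w (Suc m) = w choose m"
proof (cases w)
  case 0 then show ?thesis unfolding c1_def by (cases m) auto
next
  case (Suc w')
  then show ?thesis unfolding c1_def by (cases m) auto
qed

lemma G2_F_Suc: "G2 False (Suc L) w m = G2 False L w m + G2 True L w m"
proof (cases "w \<le> L")
  case True
  then have e: "Suc L - w = Suc (L - w)" by arith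
  show ?thesis
  proof (cases m)
    case 0 then show ?thesis unfolding G2_def using True by (simp add: e)
  next
    case (Suc m') then show ?thesis unfolding G2_def using True by (simp add: e algebra_simps)
  qed
next
  case False
  show ?thesis
  proof (cases "w = Suc L")
    case True
    have "c1 w m * ((Suc L - w) choose m) = 0" using True unfolding c1_def by (cases m) auto
    then show ?thesis unfolding G2_def using False True by simp
  next
    case False then show ?thesis unfolding G2_def using \<open>\<not> w \<le> L\<close> by auto
  qed
qed

lemma G2_T_Suc: "G2 True (Suc L) (Suc w) (Suc m) = G2 False L w m + G2 True L w (Suc m)"
proof -
  have "c1 (Suc w) (Suc m) = w choose m" unfolding c1_def by simp
  then show ?thesis unfolding G2_def using c1_pascal[of w m]
    by (auto simp: algebra_simps) (metis add_mult_distrib)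
qed

lemma G2_T0: "G2 True L w 0 = 0" unfolding G2_def by simp
lemma G2_Tw0: "G2 True L 0 m = 0" unfolding G2_def c1_def by simp

lemma cnt2_F: "cnt2 False (Suc L) w m = cnt2 False L w m + cnt2 True L w m"
proof -
  have "cnt2 False (Suc L) w m = card {b::bool list. length b = L \<and> False} + card {b. length b = L \<and> (wt b = w \<and> mb b = m)}"
    unfolding cnt2_def by (rule card_split2[where P="\<lambda>b. hdT b = False \<and> wt b = w \<and> mb b = m"]) auto
  also have "\<dots> = cnt2 False L w m + cnt2 True L w m"
  proof -
    have "{b. length b = L \<and> (wt b = w \<and> mb b = m)} = {b. length b = L \<and> hdT b = False \<and> wt b = w \<and> mb b = m}
       \<union> {b. length b = L \<and> hdT b = True \<and> wt b = w \<and> mb b = m}" by auto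
    moreover have "finite {b::bool list. length b = L \<and> R b}" for R
      by (rule finite_subset[OF _ finite_words[of L]]) auto
    ultimately show ?thesis unfolding cnt2_def by (subst card_Un_disjoint[symmetric]) auto
  qed
  finally show ?thesis .
qed

lemma cnt2_T: "cnt2 True (Suc L) (Suc w) m = (case m of 0 \<Rightarrow> 0 | Suc m' \<Rightarrow> cnt2 False L w m') + cnt2 True L w m"
proof -
  have "cnt2 True (Suc L) (Suc w) m = card {b. length b = L \<and> (if hdT b then mb b = m \<and> wt b = w else Suc (mb b) = m \<and> wt b = w)}
     + card {b::bool list. length b = L \<and> False}"
    unfolding cnt2_def by (rule card_split2[where P="\<lambda>b. hdT b = True \<and> wt b = Suc w \<and> mb b = m"]) auto
  also have "\<dots> = card ({b. length b = L \<and> hdT b = False \<and> wt b = w \<and> Suc (mb b) = m}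
     \<union> {b. length b = L \<and> hdT b = True \<and> wt b = w \<and> mb b = m})"
    by (simp, rule arg_cong[where f=card]) auto
  also have "\<dots> = card {b. length b = L \<and> hdT b = False \<and> wt b = w \<and> Suc (mb b) = m} + cnt2 True L w m"
  proof -
    have "finite {b::bool list. length b = L \<and> R b}" for R
      by (rule finite_subset[OF _ finite_words[of L]]) auto
    then show ?thesis unfolding cnt2_def by (subst card_Un_disjoint) auto
  qed
  also have "card {b. length b = L \<and> hdT b = False \<and> wt b = w \<and> Suc (mb b) = m} = (case m of 0 \<Rightarrow> 0 | Suc m' \<Rightarrow> cnt2 False L w m')"
    unfolding cnt2_def by (cases m) auto
  finally show ?thesis by simp
qed

lemma cnt2_T0: "cnt2 True (Suc L) 0 m = 0"
proof -
  have "cnt2 True (Suc L) 0 m = card {b::bool list. length b = L \<and> False} + card {b::bool list. length b = L \<and> False}"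
    unfolding cnt2_def by (rule card_split2[where P="\<lambda>b. hdT b = True \<and> wt b = 0 \<and> mb b = m"]) auto
  then show ?thesis by simp
qed

lemma cnt2_closed: "cnt2 s L w m = G2 s L w m"
proof (induction L arbitrary: s w m)
  case 0
  have "{b::bool list. length b = 0 \<and> hdT b = s \<and> wt b = w \<and> mb b = m}
     = (if s = False \<and> w = 0 \<and> m = 0 then {[]} else {})" by auto
  then show ?case unfolding cnt2_def G2_def c1_def by (cases s) auto
next
  case (Suc L)
  show ?case
  proof (cases s)
    case False then show ?thesis using Suc.IH by (simp add: cnt2_F G2_F_Suc)
  next
    case True
    show ?thesis
    proof (cases w)
      case 0 then show ?thesis using True by (simp add: cnt2_T0 G2_Tw0)
    next
      case (Suc w')
      show ?thesis
      proof (cases m)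
        case 0 then show ?thesis using True Suc Suc.IH by (simp add: cnt2_T G2_T0)
      next
        case (Suc m') then show ?thesis using True \<open>w = Suc w'\<close> Suc.IH by (simp add: cnt2_T G2_T_Suc)
      qed
    qed
  qed
qed

lemma wt_le: "wt b \<le> length b" by (induction b) auto
lemma mb_le: "mb b \<le> wt b" by (induction b) auto
lemma m1b_le: "m1b b \<le> mb b" by (induction b) auto
lemma mw_le: "mb b + wt b \<le> length b + (if hdT b then 1 else 0)"
proof (induction b)
  case Nil then show ?case by simp
next
  case (Cons c b)
  then show ?case by (cases c; cases "hdT b") auto
qed
lemma mw_le': "mb b \<le> Suc (length b) - wt b"
  using mw_le[of b] by (cases "hdT b") auto

lemma ch2_int: "int (w choose 2) * 2 = int w * (int w - 1)"
  by (induction w) (simp_all add: ch2 algebra_simps)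

lemma Nt2: "Nt 2 b = 1 + mb b + (wt b choose 2)"
proof -
  have "Nt 2 b = g 0 b + g 1 b + g 2 b" unfolding Nt_sum by (simp add: numeral_2_eq_2)
  moreover have "int (g 2 b) = int (wt b choose 2) - int (wt b) + int (mb b)" by (rule g2)
  ultimately have "int (Nt 2 b) = 1 + int (mb b) + int (wt b choose 2)" using g1 by simp
  then show ?thesis by linarith
qed

lemma Nt3: "int (Nt 3 b) = phi3 (m1b b) (mb b) (wt b)"
proof -
  have "Nt 3 b = g 0 b + g 1 b + g 2 b + g 3 b" unfolding Nt_sum by (simp add: numeral_3_eq_3 numeral_2_eq_2)
  then have "int (Nt 3 b) = 1 + int (wt b) + int (g 2 b) + int (g 3 b)" using g1 by simp
  also have "\<dots> = phi3 (m1b b) (mb b) (wt b)" unfolding g2 g3 phi3_def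
  proof -
    have "int (wt b choose 2) * 2 = int (wt b) * (int (wt b) - 1)"
      by (rule ch2_int)
    then show "1 + int (wt b) + (int (wt b choose 2) - int (wt b) + int (mb b)) +
      (int (wt b choose 3) - (int (wt b) - 2) * (int (wt b) - int (mb b)) + int (wt b) - 2 * int (mb b) + int (m1b b)) =
      1 + int (m1b b) + int (mb b) * (int (wt b) - 3) + int (wt b choose 3) - int (wt b choose 2) + 2 * int (wt b)"
      by (simp add: algebra_simps)
  qed
  finally show ?thesis .
qed

lemma fiber2: "card {b. length b = L \<and> wt b = w \<and> mb b = m} = G2 False (Suc L) w m"
proof -
  have fin: "finite {b::bool list. length b = L \<and> R b}" for R
    by (rule finite_subset[OF _ finite_words[of L]]) auto
  have "{b. length b = L \<and> wt b = w \<and> mb b = m} = {b. length b = L \<and> hdT b = False \<and> wt b = w \<and> mb b = m}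
       \<union> {b. length b = L \<and> hdT b = True \<and> wt b = w \<and> mb b = m}" by auto
  then have "card {b. length b = L \<and> wt b = w \<and> mb b = m} = cnt2 False L w m + cnt2 True L w m"
    unfolding cnt2_def by (simp add: card_Un_disjoint[symmetric] fin) (subst card_Un_disjoint[symmetric]; auto simp: fin)
  then show ?thesis by (simp add: cnt2_closed G2_F_Suc)
qed

lemma fiber3: "card {b. length b = L \<and> wt b = w \<and> mb b = m \<and> m1b b = m1} = F3 0 (Suc L) w m m1"
proof -
  have "card {b. length b = L \<and> wt b = w \<and> mb b = m \<and> m1b b = m1} = cnt3 L 0 w m m1 + cnt3 L 1 w m m1 + cnt3 L 2 w m m1"
    unfolding cnt3_def by (subst card_st_split) simp
  then show ?thesis by (simp add: cnt3_closed F3_0_Suc)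
qed

lemma sum2:
  "(\<Sum>b\<in>{b. length b = L}. 1 / real (Nt 2 b)) =
   (\<Sum>w = 0..L. \<Sum>m = 0..min w (Suc L - w). real (G2 False (Suc L) w m) / (1 + real m + real (w choose 2)))"
proof -
  let ?X = "{b::bool list. length b = L}"
  let ?f = "\<lambda>b. 1 / real (Nt 2 b)"
  have fin: "finite {b::bool list. length b = L \<and> R b}" for R
    by (rule finite_subset[OF _ finite_words[of L]]) auto
  have "(\<Sum>b\<in>?X. ?f b) = (\<Sum>w\<in>{0..L}. \<Sum>b\<in>{x. x \<in> ?X \<and> wt x = w}. ?f b)"
    by (rule sum.group[symmetric]) (use finite_words wt_le in auto)
  also have "\<dots> = (\<Sum>w\<in>{0..L}. \<Sum>m\<in>{0..min w (Suc L - w)}. real (G2 False (Suc L) w m) / (1 + real m + real (w choose 2)))"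
  proof (rule sum.cong[OF refl])
    fix w assume "w \<in> {0..L}"
    have "(\<Sum>b\<in>{x. x \<in> ?X \<and> wt x = w}. ?f b) = (\<Sum>m\<in>{0..min w (Suc L - w)}. \<Sum>b\<in>{x. x \<in> {x. x \<in> ?X \<and> wt x = w} \<and> mb x = m}. ?f b)"
      by (rule sum.group[symmetric]) (use fin mb_le mw_le' in \<open>auto simp: fin\<close>)
    also have "\<dots> = (\<Sum>m\<in>{0..min w (Suc L - w)}. real (G2 False (Suc L) w m) / (1 + real m + real (w choose 2)))"
    proof (rule sum.cong[OF refl])
      fix m
      have e: "{x. x \<in> {x. x \<in> ?X \<and> wt x = w} \<and> mb x = m} = {b. length b = L \<and> wt b = w \<and> mb b = m}" by auto
      have "(\<Sum>b\<in>{b. length b = L \<and> wt b = w \<and> mb b = m}. ?f b) = (\<Sum>b\<in>{b. length b = L \<and> wt b = w \<and> mb b = m}. 1 / (1 + real m + real (w choose 2)))"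
        by (rule sum.cong[OF refl]) (simp add: Nt2)
      also have "\<dots> = real (G2 False (Suc L) w m) / (1 + real m + real (w choose 2))"
        by (simp add: fiber2)
      finally show "(\<Sum>b\<in>{x. x \<in> {x. x \<in> ?X \<and> wt x = w} \<and> mb x = m}. ?f b) = real (G2 False (Suc L) w m) / (1 + real m + real (w choose 2))"
        unfolding e .
    qed
    finally show "(\<Sum>b\<in>{x. x \<in> ?X \<and> wt x = w}. ?f b) = (\<Sum>m\<in>{0..min w (Suc L - w)}. real (G2 False (Suc L) w m) / (1 + real m + real (w choose 2)))" .
  qed
  finally show ?thesis .
qed

lemma sum3:
  "(\<Sum>b\<in>{b. length b = L}. 1 / real (Nt 3 b)) =
   (\<Sum>w = 0..L. \<Sum>m = 0..min w (Suc L - w). \<Sum>m1 = 0..m. real (F3 0 (Suc L) w m m1) / real_of_int (phi3 m1 m w))"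
proof -
  let ?X = "{b::bool list. length b = L}"
  let ?f = "\<lambda>b. 1 / real (Nt 3 b)"
  have fin: "finite {b::bool list. length b = L \<and> R b}" for R
    by (rule finite_subset[OF _ finite_words[of L]]) auto
  have "(\<Sum>b\<in>?X. ?f b) = (\<Sum>w\<in>{0..L}. \<Sum>b\<in>{x. x \<in> ?X \<and> wt x = w}. ?f b)"
    by (rule sum.group[symmetric]) (use finite_words wt_le in auto)
  also have "\<dots> = (\<Sum>w\<in>{0..L}. \<Sum>m\<in>{0..min w (Suc L - w)}. \<Sum>m1 = 0..m. real (F3 0 (Suc L) w m m1) / real_of_int (phi3 m1 m w))"
  proof (rule sum.cong[OF refl])
    fix w assume "w \<in> {0..L}"
    have "(\<Sum>b\<in>{x. x \<in> ?X \<and> wt x = w}. ?f b) = (\<Sum>m\<in>{0..min w (Suc L - w)}. \<Sum>b\<in>{x. x \<in> {x. x \<in> ?X \<and> wt x = w} \<and> mb x = m}. ?f b)"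
      by (rule sum.group[symmetric]) (use fin mb_le mw_le' in \<open>auto simp: fin\<close>)
    also have "\<dots> = (\<Sum>m\<in>{0..min w (Suc L - w)}. \<Sum>m1 = 0..m. real (F3 0 (Suc L) w m m1) / real_of_int (phi3 m1 m w))"
    proof (rule sum.cong[OF refl])
      fix m
      let ?Y = "{x. x \<in> {x. x \<in> ?X \<and> wt x = w} \<and> mb x = m}"
      have "(\<Sum>b\<in>?Y. ?f b) = (\<Sum>m1\<in>{0..m}. \<Sum>b\<in>{x. x \<in> ?Y \<and> m1b x = m1}. ?f b)"
        by (rule sum.group[symmetric]) (use fin m1b_le in \<open>auto simp: fin\<close>)
      also have "\<dots> = (\<Sum>m1 = 0..m. real (F3 0 (Suc L) w m m1) / real_of_int (phi3 m1 m w))"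
      proof (rule sum.cong[OF refl])
        fix m1
        have e: "{x. x \<in> ?Y \<and> m1b x = m1} = {b. length b = L \<and> wt b = w \<and> mb b = m \<and> m1b b = m1}" by auto
        have "(\<Sum>b\<in>{b. length b = L \<and> wt b = w \<and> mb b = m \<and> m1b b = m1}. ?f b)
           = (\<Sum>b\<in>{b. length b = L \<and> wt b = w \<and> mb b = m \<and> m1b b = m1}. 1 / real_of_int (phi3 m1 m w))"
        proof (rule sum.cong[OF refl])
          fix b assume "b \<in> {b. length b = L \<and> wt b = w \<and> mb b = m \<and> m1b b = m1}"
          then have "real (Nt 3 b) = real_of_int (phi3 m1 m w)" using Nt3[of b]
            by (metis (mono_tags, lifting) mem_Collect_eq of_int_of_nat_eq)
          then show "?f b = 1 / real_of_int (phi3 m1 m w)" by simp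
        qed
        also have "\<dots> = real (F3 0 (Suc L) w m m1) / real_of_int (phi3 m1 m w)"
          by (simp add: fiber3)
        finally show "(\<Sum>b\<in>{x. x \<in> ?Y \<and> m1b x = m1}. ?f b) = real (F3 0 (Suc L) w m m1) / real_of_int (phi3 m1 m w)"
          unfolding e .
      qed
      finally show "(\<Sum>b\<in>?Y. ?f b) = (\<Sum>m1 = 0..m. real (F3 0 (Suc L) w m m1) / real_of_int (phi3 m1 m w))" .
    qed
    finally show "(\<Sum>b\<in>{x. x \<in> ?X \<and> wt x = w}. ?f b) = (\<Sum>m\<in>{0..min w (Suc L - w)}. \<Sum>m1 = 0..m. real (F3 0 (Suc L) w m m1) / real_of_int (phi3 m1 m w))" .
  qed
  finally show ?thesis .
qed

lemma ib_nat: "ibinom (int a) (int b) = int (a choose b)"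
  unfolding ibinom_def by simp

lemma ib_c1: "ibinom (int w - 1) (int m - 1) = int (c1 w m)"
  unfolding ibinom_def c1_def by (auto simp: nat_diff_distrib)

lemma ib_Kc: "m1 \<le> m \<Longrightarrow> m \<le> w \<Longrightarrow> ibinom (int w - int m - 1) (int m - int m1 - 1) = int (Kc w m m1)"
proof -
  assume a: "m1 \<le> m" "m \<le> w"
  show ?thesis
  proof (cases "m1 = m")
    case True then show ?thesis unfolding ibinom_def Kc_def using a by auto
  next
    case False
    then have lt: "m1 < m" using a by simp
    show ?thesis
    proof (cases "w = m")
      case True then show ?thesis unfolding ibinom_def Kc_def using lt by auto
    next
      case False
      then have "nat (int w - int m - 1) = w - m - 1" "nat (int m - int m1 - 1) = m - m1 - 1" using a lt by auto
      moreover have "(w - m - 1) choose (m - m1 - 1) = 0" if h: "\<not> 2*m - m1 \<le> w"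
      proof -
        have "w - m - 1 < m - m1 - 1" using h a lt \<open>w \<noteq> m\<close> by arith
        then show ?thesis by (rule binomial_eq_0)
      qed
      ultimately show ?thesis unfolding ibinom_def Kc_def using a lt False by auto
    qed
  qed
qed

lemma bound_t:
  "real (M_grain (Suc L) t) \<le> 2 * (\<Sum>b\<in>{b. length b = L}. 1 / real (Nt t b))"
proof -
  have "real (M_grain (Suc L) t) \<le> (\<Sum>y\<in>{y. length y = Suc L}. 1 / real (card (Phi_grain t y)))"
    by (rule M_bound)
  also have "\<dots> = (\<Sum>y\<in>{y. length y = Suc L}. (\<lambda>b. 1 / real (Nt t b)) (db y))"
    by (simp add: card_Phi_Nt)
  also have "\<dots> = 2 * (\<Sum>b\<in>{b. length b = L}. 1 / real (Nt t b))"
    by (rule sum_words)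
  finally show ?thesis .
qed

lemma term2: "w \<le> L \<Longrightarrow> real (G2 False (Suc L) w m) =
   real_of_int (ibinom (int w - 1) (int m - 1)) * real_of_int (ibinom (int (Suc L - w)) (int m))"
  unfolding G2_def ib_c1 ib_nat by simp

lemma term3: "w \<le> L \<Longrightarrow> m \<le> w \<Longrightarrow> m1 \<le> m \<Longrightarrow> real (F3 0 (Suc L) w m m1) =
   real_of_int (ibinom (int m) (int m1)) * real_of_int (ibinom (int w - int m - 1) (int m - int m1 - 1))
   * real_of_int (ibinom (int (Suc L - w)) (int m))"
proof -
  assume a: "w \<le> L" "m \<le> w" "m1 \<le> m"
  have k: "ibinom (int w - int m - 1) (int m - int m1 - 1) = int (Kc w m m1)" using ib_Kc a(3,2) .
  show ?thesis unfolding F3_def k ib_nat using a by simp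
qed

theorem corollary3p4:
  fixes n :: nat
  assumes "n \<ge> 1"
  shows "(real (M_grain n 2) \<le> 2 * (\<Sum>w = 0..n-1. \<Sum>m = 0..min w (n - w).
            real_of_int (ibinom (int w - 1) (int m - 1)) * real_of_int (ibinom (int (n - w)) (int m))
            / (1 + real m + real (w choose 2)))) \<and>
         (real (M_grain n 3) \<le> 2 * (\<Sum>w = 0..n-1. \<Sum>m = 0..min w (n - w). \<Sum>m1 = 0..m.
            real_of_int (ibinom (int m) (int m1)) * real_of_int (ibinom (int w - int m - 1) (int m - int m1 - 1))
            * real_of_int (ibinom (int (n - w)) (int m)) / real_of_int (phi3 m1 m w)))"
proof -
  obtain L where n: "n = Suc L" using assms by (cases n) auto
  have A: "real (M_grain n 2) \<le> 2 * (\<Sum>w = 0..n-1. \<Sum>m = 0..min w (n - w).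
            real_of_int (ibinom (int w - 1) (int m - 1)) * real_of_int (ibinom (int (n - w)) (int m))
            / (1 + real m + real (w choose 2)))"
  proof -
    have "(\<Sum>w = 0..n-1. \<Sum>m = 0..min w (n - w).
            real_of_int (ibinom (int w - 1) (int m - 1)) * real_of_int (ibinom (int (n - w)) (int m))
            / (1 + real m + real (w choose 2)))
        = (\<Sum>w = 0..L. \<Sum>m = 0..min w (Suc L - w). real (G2 False (Suc L) w m) / (1 + real m + real (w choose 2)))"
      unfolding n by (intro sum.cong) (auto simp del: of_nat_diff simp add: term2)
    also have "\<dots> = (\<Sum>b\<in>{b. length b = L}. 1 / real (Nt 2 b))" by (rule sum2[symmetric])
    finally show ?thesis using bound_t[of L 2] n by simp
  qed
  have B: "real (M_grain n 3) \<le> 2 * (\<Sum>w = 0..n-1. \<Sum>m = 0..min w (n - w). \<Sum>m1 = 0..m.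
            real_of_int (ibinom (int m) (int m1)) * real_of_int (ibinom (int w - int m - 1) (int m - int m1 - 1))
            * real_of_int (ibinom (int (n - w)) (int m)) / real_of_int (phi3 m1 m w))"
  proof -
    have "(\<Sum>w = 0..n-1. \<Sum>m = 0..min w (n - w). \<Sum>m1 = 0..m.
            real_of_int (ibinom (int m) (int m1)) * real_of_int (ibinom (int w - int m - 1) (int m - int m1 - 1))
            * real_of_int (ibinom (int (n - w)) (int m)) / real_of_int (phi3 m1 m w))
        = (\<Sum>w = 0..L. \<Sum>m = 0..min w (Suc L - w). \<Sum>m1 = 0..m. real (F3 0 (Suc L) w m m1) / real_of_int (phi3 m1 m w))"
      unfolding n by (intro sum.cong) (auto simp del: of_nat_diff simp add: term3)
    also have "\<dots> = (\<Sum>b\<in>{b. length b = L}. 1 / real (Nt 3 b))" by (rule sum3[symmetric])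
    finally show ?thesis using bound_t[of L 3] n by simp
  qed
  show ?thesis using A B by blast
qed

end
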